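(* Let $G$ be a connected graph with $n$ vertices and let $k$ be an integer. The following statements are equivalent: (1) there is a GS ordering of $G$ whose $\mathcal{F}$-tree has at least $k$ leaves; (2) there is a spanning tree of $G$ with at least $k$ leaves; (3) there is a connected dominating set of $G$ with at most $n-k$ vertices.
   Context: All graphs are finite, simple, undirected, connected and non-empty. A GS ordering of $G$ is an ordering $(v_1,\dots,v_n)$ of $V(G)$ such that every $v_i$ with $i>1$ has a neighbor among $v_1,\dots,v_{i-1}$. Its $\mathcal{F}$-tree is the spanning tree rooted at $v_1$ in which the parent of $v_i$ ($i>1$) is its leftmost neighbor in the ordering. Spanning trees are rooted; a leaf is a non-root vertex without children (the root is never a leaf). A connected dominating set is a set $D\subseteq V(G)$ with $G[D]$ connected and every vertex outside $D$ adjacent to a vertex of $D$. *)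

theory Defs
  imports Main
begin

definition simple_graph :: "'a set \<Rightarrow> 'a set set \<Rightarrow> bool" where
  "simple_graph V E \<longleftrightarrow> finite V \<and> (\<forall>e\<in>E. \<exists>x y. x \<noteq> y \<and> x \<in> V \<and> y \<in> V \<and> e = {x, y})"

definition adj_rel :: "'a set set \<Rightarrow> ('a \<times> 'a) set" where
  "adj_rel E = {(x, y). {x, y} \<in> E}"

definition connected_graph :: "'a set \<Rightarrow> 'a set set \<Rightarrow> bool" where
  "connected_graph V E \<longleftrightarrow> V \<noteq> {} \<and> (\<forall>u\<in>V. \<forall>v\<in>V. (u, v) \<in> (adj_rel E)\<^sup>*)"

definition has_cycle :: "'a set set \<Rightarrow> bool" where
  "has_cycle E \<longleftrightarrow> (\<exists>cs. length cs \<ge> 3 \<and> distinct cs \<and>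
      (\<forall>i < length cs - 1. {cs ! i, cs ! Suc i} \<in> E) \<and> {last cs, hd cs} \<in> E)"

definition spanning_tree :: "'a set \<Rightarrow> 'a set set \<Rightarrow> 'a set set \<Rightarrow> bool" where
  "spanning_tree V E T \<longleftrightarrow> T \<subseteq> E \<and> connected_graph V T \<and> \<not> has_cycle T"

definition tree_degree :: "'a set set \<Rightarrow> 'a \<Rightarrow> nat" where
  "tree_degree T v = card {w. {v, w} \<in> T}"

(* Leaves of a tree T rooted at r: non-root vertices without children.
   In a tree, a non-root vertex has no children iff it has exactly one neighbour (its parent). *)
definition rooted_tree_leaves :: "'a set \<Rightarrow> 'a set set \<Rightarrow> 'a \<Rightarrow> 'a set" where
  "rooted_tree_leaves V T r = {v \<in> V. v \<noteq> r \<and> tree_degree T v = 1}"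

definition gs_ordering :: "'a set \<Rightarrow> 'a set set \<Rightarrow> 'a list \<Rightarrow> bool" where
  "gs_ordering V E vs \<longleftrightarrow> distinct vs \<and> set vs = V \<and>
     (\<forall>i < length vs. 0 < i \<longrightarrow> (\<exists>j < i. {vs ! j, vs ! i} \<in> E))"

definition ftree_parent_idx :: "'a set set \<Rightarrow> 'a list \<Rightarrow> nat \<Rightarrow> nat" where
  "ftree_parent_idx E vs i = (LEAST j. {vs ! j, vs ! i} \<in> E)"

definition ftree_leaves :: "'a set set \<Rightarrow> 'a list \<Rightarrow> 'a set" where
  "ftree_leaves E vs = {vs ! i | i. 0 < i \<and> i < length vs \<and>
      \<not> (\<exists>j < length vs. 0 < j \<and> ftree_parent_idx E vs j = i)}"

definition connected_dominating_set :: "'a set \<Rightarrow> 'a set set \<Rightarrow> 'a set \<Rightarrow> bool" where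
  "connected_dominating_set V E D \<longleftrightarrow> D \<subseteq> V \<and>
     connected_graph D {e \<in> E. e \<subseteq> D} \<and>
     (\<forall>v \<in> V - D. \<exists>d \<in> D. {v, d} \<in> E)"

end

theory Submission
  imports Defs
begin

lemma adj_rel_sym: "(x,y) \<in> adj_rel E \<Longrightarrow> (y,x) \<in> adj_rel E"
  by (simp add: adj_rel_def insert_commute)

lemma adj_rtrancl_sym: "(x,y) \<in> (adj_rel E)\<^sup>* \<Longrightarrow> (y,x) \<in> (adj_rel E)\<^sup>*"
proof (induction rule: rtrancl_induct)
  case base then show ?case by simp
next
  case (step y z)
  then show ?case using adj_rel_sym by (meson converse_rtrancl_into_rtrancl)
qed

lemma sg_edge: assumes "simple_graph V E" "{a,b} \<in> E" shows "a \<in> V \<and> b \<in> V \<and> a \<noteq> b"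
proof -
  obtain x y where "x \<noteq> y" "x\<in>V" "y\<in>V" "{a,b} = {x,y}"
    using assms unfolding simple_graph_def by blast
  then show ?thesis by (auto simp: doubleton_eq_iff)
qed

lemma parent_props:
  assumes "gs_ordering V E vs" "0 < i" "i < length vs"
  shows "ftree_parent_idx E vs i < i \<and> {vs ! ftree_parent_idx E vs i, vs ! i} \<in> E"
proof -
  obtain j where j: "j < i" "{vs!j, vs!i} \<in> E" using assms unfolding gs_ordering_def by blast
  have "{vs ! ftree_parent_idx E vs i, vs ! i} \<in> E"
    unfolding ftree_parent_idx_def by (rule LeastI[where P="\<lambda>j. {vs!j, vs!i} \<in> E", OF j(2)])
  moreover have "ftree_parent_idx E vs i \<le> j"
    unfolding ftree_parent_idx_def by (rule Least_le[where P="\<lambda>j. {vs!j, vs!i} \<in> E", OF j(2)])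
  ultimately show ?thesis using j(1) by simp
qed

definition ftree :: "'a set set \<Rightarrow> 'a list \<Rightarrow> 'a set set" where
  "ftree E vs = {{vs!i, vs!(ftree_parent_idx E vs i)} | i. 0<i \<and> i<length vs}"

lemma ftree_edge_unique:
  assumes gs: "gs_ordering V E vs" and e: "{vs!m, vs!a} \<in> ftree E vs"
    and m: "m < length vs" and am: "a < m"
  shows "a = ftree_parent_idx E vs m"
proof -
  obtain i where i: "0<i" "i<length vs" "{vs!m, vs!a} = {vs!i, vs!(ftree_parent_idx E vs i)}"
    using e unfolding ftree_def by blast
  have d: "distinct vs" using gs by (simp add: gs_ordering_def)
  have pi: "ftree_parent_idx E vs i < i" using parent_props[OF gs i(1,2)] by simp
  have an: "a < length vs" using am m by simp
  have pn: "ftree_parent_idx E vs i < length vs" using pi i(2) by simp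
  from i(3) consider "vs!m = vs!i \<and> vs!a = vs!(ftree_parent_idx E vs i)"
    | "vs!m = vs!(ftree_parent_idx E vs i) \<and> vs!a = vs!i"
    by (auto simp: doubleton_eq_iff)
  then show ?thesis
  proof cases
    case 1
    then have "m = i" using d m i(2) nth_eq_iff_index_eq by blast
    moreover have "a = ftree_parent_idx E vs i" using 1 d an pn nth_eq_iff_index_eq by blast
    ultimately show ?thesis by simp
  next
    case 2
    then have "m = ftree_parent_idx E vs i" using d m pn nth_eq_iff_index_eq by blast
    moreover have "a = i" using 2 d an i(2) nth_eq_iff_index_eq by blast
    ultimately show ?thesis using pi am by simp
  qed
qed

lemma gs_to_st:
  assumes sg: "simple_graph V E" and gs: "gs_ordering V E vs" and ne: "V \<noteq> {}"
  shows "spanning_tree V E (ftree E vs) \<and> vs!0 \<in> V \<and>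
         ftree_leaves E vs \<subseteq> rooted_tree_leaves V (ftree E vs) (vs!0)"
proof -
  let ?T = "ftree E vs" and ?p = "ftree_parent_idx E vs" and ?n = "length vs"
  have d: "distinct vs" and sv: "set vs = V" using gs by (auto simp: gs_ordering_def)
  have n0: "0 < ?n" using sv ne by auto
  have r: "vs!0 \<in> V" using n0 sv nth_mem by blast
  have TE: "?T \<subseteq> E"
  proof
    fix e assume "e \<in> ?T"
    then obtain i where "0<i" "i<?n" "e = {vs!i, vs!(?p i)}" unfolding ftree_def by blast
    then show "e \<in> E" using parent_props[OF gs] by (metis insert_commute)
  qed
  have reach: "(vs!0, vs!i) \<in> (adj_rel ?T)\<^sup>*" if "i < ?n" for i
    using that
  proof (induction i rule: less_induct)
    case (less i)
    show ?case
    proof (cases "i = 0")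
      case True then show ?thesis by simp
    next
      case False
      then have pi: "?p i < i" using parent_props[OF gs _ less.prems] by simp
      have "(vs!0, vs!(?p i)) \<in> (adj_rel ?T)\<^sup>*" using less.IH[OF pi] pi less.prems by simp
      moreover have "{vs!i, vs!(?p i)} \<in> ?T" unfolding ftree_def using False less.prems by blast
      then have "(vs!(?p i), vs!i) \<in> adj_rel ?T"
        by (simp add: adj_rel_def insert_commute)
      ultimately show ?thesis by (rule rtrancl_into_rtrancl)
    qed
  qed
  have conn: "connected_graph V ?T"
    unfolding connected_graph_def
  proof (intro conjI ballI)
    show "V \<noteq> {}" by fact
    fix u v assume "u \<in> V" "v \<in> V"
    then obtain a b where "a < ?n" "b < ?n" "u = vs!a" "v = vs!b" using sv by (metis in_set_conv_nth)
    then show "(u,v) \<in> (adj_rel ?T)\<^sup>*" using reach adj_rtrancl_sym by (meson rtrancl_trans)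
  qed
  have Tv: "x \<in> set vs" if "x \<in> e" "e \<in> ?T" for x e
  proof -
    from that obtain i where i: "0<i" "i<?n" "x = vs!i \<or> x = vs!(?p i)" unfolding ftree_def by blast
    moreover have "?p i < ?n" using parent_props[OF gs, of i] i by auto
    ultimately show ?thesis by auto
  qed
  have acyc: "\<not> has_cycle ?T"
  proof
    assume "has_cycle ?T"
    then obtain cs where L3: "length cs \<ge> 3" and dc: "distinct cs"
      and ed: "\<forall>i < length cs - 1. {cs ! i, cs ! Suc i} \<in> ?T" and cl: "{last cs, hd cs} \<in> ?T"
      unfolding has_cycle_def by blast
    define L where "L = length cs"
    have csne: "cs \<noteq> []" using L3 by auto
    have lastc: "last cs = cs!(L-1)" using csne L_def by (simp add: last_conv_nth)
    have hdc: "hd cs = cs!0" using csne by (simp add: hd_conv_nth)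
    define nx where "nx t = (if t+1 < L then t+1 else 0)" for t
    define pv where "pv t = (if t = 0 then L-1 else t-1)" for t
    have e1: "{cs!t, cs!(nx t)} \<in> ?T" if "t < L" for t
    proof (cases "t+1 < L")
      case True then show ?thesis using ed L_def nx_def by auto
    next
      case False then have "t = L-1" using that by simp
      then show ?thesis using cl lastc hdc nx_def False by simp
    qed
    have e2: "{cs!(pv t), cs!t} \<in> ?T" if "t < L" for t
    proof (cases "t = 0")
      case True then show ?thesis using cl lastc hdc pv_def by simp
    next
      case False then have "t - 1 < L - 1" "Suc (t-1) = t" using that by auto
      then have "{cs!(t-1), cs!(Suc (t-1))} \<in> ?T" using ed L_def by blast
      then show ?thesis using pv_def False \<open>Suc (t-1) = t\<close> by simp
    qed
    have csv: "cs!t \<in> set vs" if "t < L" for t using e1[OF that] Tv by blast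
    define I where "I = {i. i < ?n \<and> vs!i \<in> set cs}"
    have fI: "finite I" unfolding I_def by simp
    have "0 < L" unfolding L_def using L3 by linarith
    then have "cs!0 \<in> set vs" using csv by blast
    then obtain i0 where "i0 < ?n" "vs!i0 = cs!0" by (metis in_set_conv_nth)
    then have "i0 \<in> I" using csne I_def by auto
    then have neI: "I \<noteq> {}" by auto
    define m where "m = Max I"
    have mI: "m \<in> I" using fI neI m_def by simp
    have mx: "i \<le> m" if "i \<in> I" for i using fI that m_def by simp
    from mI obtain t where t: "t < L" "cs!t = vs!m" unfolding I_def L_def by (metis (mono_tags, lifting) in_set_conv_nth mem_Collect_eq)
    have mn: "m < ?n" using mI I_def by simp
    have key: "cs!s = vs!(?p m)" if "s < L" "s \<noteq> t" "{cs!t, cs!s} \<in> ?T" for s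
    proof -
      note ss = that
      obtain j where j: "j < ?n" "vs!j = cs!s" using csv[OF ss(1)] by (metis in_set_conv_nth)
      have "j \<in> I" using j ss(1) I_def L_def by auto
      then have "j \<le> m" by (rule mx)
      moreover have "j \<noteq> m" using j t ss dc L_def by (metis nth_eq_iff_index_eq)
      ultimately have jm: "j < m" by simp
      have "{vs!m, vs!j} \<in> ?T" using ss(3) t j by simp
      then have "j = ?p m" using ftree_edge_unique[OF gs _ mn jm] by simp
      then show ?thesis using j by simp
    qed
    have nt: "nx t < L" "pv t < L" "nx t \<noteq> t" "pv t \<noteq> t" "nx t \<noteq> pv t"
      using t L3 L_def nx_def pv_def by auto
    have "cs!(nx t) = vs!(?p m)" using key[of "nx t"] e1[OF t(1)] nt by simp
    moreover have "{cs!t, cs!(pv t)} \<in> ?T" using e2[OF t(1)] by (simp add: insert_commute)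
    then have "cs!(pv t) = vs!(?p m)" using key[of "pv t"] nt by simp
    ultimately have "cs!(nx t) = cs!(pv t)" by simp
    then show False using nt dc L_def nth_eq_iff_index_eq by metis
  qed
  have lv: "ftree_leaves E vs \<subseteq> rooted_tree_leaves V ?T (vs!0)"
  proof
    fix x assume "x \<in> ftree_leaves E vs"
    then obtain i where i: "x = vs!i" "0<i" "i<?n" and np: "\<not>(\<exists>j<?n. 0<j \<and> ?p j = i)"
      unfolding ftree_leaves_def by blast
    have "{w. {x,w} \<in> ?T} = {vs!(?p i)}"
    proof (rule set_eqI, rule iffI)
      fix w assume "w \<in> {w. {x,w} \<in> ?T}"
      then obtain j where j: "0<j" "j<?n" "{x,w} = {vs!j, vs!(?p j)}" unfolding ftree_def by blast
      have pj: "?p j < j" using parent_props[OF gs j(1,2)] by simp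
      have pjn: "?p j < ?n" using pj j(2) by simp
      from j(3) have "(x = vs!j \<and> w = vs!(?p j)) \<or> (x = vs!(?p j) \<and> w = vs!j)"
        by (auto simp: doubleton_eq_iff)
      then show "w \<in> {vs!(?p i)}"
      proof
        assume a: "x = vs!j \<and> w = vs!(?p j)"
        then have "j = i" using i d j(2) nth_eq_iff_index_eq by metis
        then show ?thesis using a by simp
      next
        assume a: "x = vs!(?p j) \<and> w = vs!j"
        then have "?p j = i" using i d pjn nth_eq_iff_index_eq by metis
        then show ?thesis using np j by blast
      qed
    next
      fix w assume "w \<in> {vs!(?p i)}"
      then show "w \<in> {w. {x,w} \<in> ?T}" unfolding ftree_def using i by blast
    qed
    then have "tree_degree ?T x = 1" unfolding tree_degree_def by simp
    moreover have "x \<noteq> vs!0" using i d n0 nth_eq_iff_index_eq by (metis less_irrefl)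
    moreover have "x \<in> V" using i sv by auto
    ultimately show "x \<in> rooted_tree_leaves V ?T (vs!0)" unfolding rooted_tree_leaves_def by simp
  qed
  show ?thesis using TE conn acyc r lv unfolding spanning_tree_def by simp
qed

lemma shortcut:
  assumes symR: "\<And>a b. (a,b) \<in> R \<Longrightarrow> (b,a) \<in> R"
    and uniq: "\<And>v. v \<in> L \<Longrightarrow> \<exists>w. w \<notin> L \<and> (\<forall>z. (v,z) \<in> R \<longrightarrow> z = w)"
    and path: "(u,y) \<in> R\<^sup>*" and u: "u \<notin> L"
  shows "(y \<notin> L \<longrightarrow> (u,y) \<in> (R \<inter> (-L) \<times> (-L))\<^sup>*) \<and>
         (y \<in> L \<longrightarrow> (\<exists>w. w \<notin> L \<and> (y,w) \<in> R \<and> (u,w) \<in> (R \<inter> (-L) \<times> (-L))\<^sup>*))"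
  using path
proof (induction rule: rtrancl_induct)
  case base then show ?case using u by simp
next
  case (step y x)
  let ?R' = "R \<inter> (-L) \<times> (-L)"
  show ?case
  proof (cases "y \<in> L")
    case False
    then have uy: "(u,y) \<in> ?R'\<^sup>*" using step.IH by simp
    show ?thesis
    proof (cases "x \<in> L")
      case False
      then have "(y,x) \<in> ?R'" using \<open>y \<notin> L\<close> step.hyps(2) by simp
      then show ?thesis using uy False by (meson rtrancl_into_rtrancl)
    next
      case True
      then have "(x,y) \<in> R" using symR step.hyps(2) by blast
      then show ?thesis using True uy \<open>y \<notin> L\<close> by blast
    qed
  next
    case True
    then obtain w where w: "w \<notin> L" "(y,w) \<in> R" "(u,w) \<in> ?R'\<^sup>*" using step.IH by blast
    obtain w' where w': "w' \<notin> L" "\<forall>z. (y,z) \<in> R \<longrightarrow> z = w'" using uniq[OF True] by blast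
    have "x = w" using w'(2) w(2) step.hyps(2) by metis
    then show ?thesis using w by simp
  qed
qed

lemma st_to_cds:
  assumes sg: "simple_graph V E" and st: "spanning_tree V E T" and r: "r \<in> V"
  shows "connected_dominating_set V E (V - rooted_tree_leaves V T r)"
proof -
  let ?L = "rooted_tree_leaves V T r"
  let ?D = "V - ?L"
  let ?R = "adj_rel T"
  have TE: "T \<subseteq> E" and conn: "connected_graph V T" using st by (auto simp: spanning_tree_def)
  have Tedge: "a \<in> V \<and> b \<in> V \<and> a \<noteq> b" if "{a,b} \<in> T" for a b using sg_edge[OF sg] TE that by blast
  have nb: "\<exists>w. {w. {v,w} \<in> T} = {w}" if "v \<in> ?L" for v
    using that unfolding rooted_tree_leaves_def tree_degree_def by (auto simp: card_1_singleton_iff)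
  have uniq: "\<exists>w. w \<notin> ?L \<and> (\<forall>z. (v,z) \<in> ?R \<longrightarrow> z = w)" if vL: "v \<in> ?L" for v
  proof -
    obtain w where w: "{w. {v,w} \<in> T} = {w}" using nb[OF vL] by blast
    have vw: "{v,w} \<in> T" using w by blast
    have allw: "\<forall>z. (v,z) \<in> ?R \<longrightarrow> z = w" using w by (auto simp: adj_rel_def)
    have "w \<notin> ?L"
    proof
      assume wL: "w \<in> ?L"
      obtain w' where w': "{w'. {w,w'} \<in> T} = {w'}" using nb[OF wL] by blast
      have "{w,v} \<in> T" using vw by (simp add: insert_commute)
      then have "v \<in> {w'. {w,w'} \<in> T}" by simp
      then have "w' = v" using w' by simp
      then have allv: "\<forall>z. (w,z) \<in> ?R \<longrightarrow> z = v" using w' by (auto simp: adj_rel_def)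
      have "v \<in> V" using vL unfolding rooted_tree_leaves_def by simp
      then have "(v, r) \<in> ?R\<^sup>*" using conn r unfolding connected_graph_def by blast
      then have "r \<in> {v,w}"
        by (induction rule: rtrancl_induct) (use allw allv in auto)
      moreover have "r \<noteq> v" "r \<noteq> w" using vL wL unfolding rooted_tree_leaves_def by auto
      ultimately show False by simp
    qed
    then show ?thesis using allw by blast
  qed
  have rD: "r \<in> ?D" using r unfolding rooted_tree_leaves_def by simp
  have conD: "connected_graph ?D {e \<in> E. e \<subseteq> ?D}"
    unfolding connected_graph_def
  proof (intro conjI ballI)
    show "?D \<noteq> {}" using rD by blast
    fix u x assume u: "u \<in> ?D" and x: "x \<in> ?D"
    have "(u,x) \<in> ?R\<^sup>*" using conn u x unfolding connected_graph_def by blast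
    from shortcut[of ?R ?L u x, OF adj_rel_sym uniq this] u x
    have "(u,x) \<in> (?R \<inter> (-?L) \<times> (-?L))\<^sup>*" by blast
    moreover have "?R \<inter> (-?L) \<times> (-?L) \<subseteq> adj_rel {e \<in> E. e \<subseteq> ?D}"
    proof
      fix p assume "p \<in> ?R \<inter> (-?L) \<times> (-?L)"
      then obtain a b where p: "p = (a,b)" "{a,b} \<in> T" "a \<notin> ?L" "b \<notin> ?L" by (auto simp: adj_rel_def)
      then have "a \<in> V" "b \<in> V" using Tedge by auto
      then show "p \<in> adj_rel {e \<in> E. e \<subseteq> ?D}" using p TE by (auto simp: adj_rel_def)
    qed
    ultimately show "(u,x) \<in> (adj_rel {e \<in> E. e \<subseteq> ?D})\<^sup>*" using rtrancl_mono by blast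
  qed
  have dom: "\<forall>v \<in> V - ?D. \<exists>d \<in> ?D. {v,d} \<in> E"
  proof
    fix v assume "v \<in> V - ?D"
    then have vL: "v \<in> ?L" by blast
    obtain w where w: "{w. {v,w} \<in> T} = {w}" using nb[OF vL] by blast
    obtain w' where w': "w' \<notin> ?L" "\<forall>z. (v,z) \<in> ?R \<longrightarrow> z = w'" using uniq[OF vL] by blast
    have vw: "{v,w} \<in> T" using w by blast
    then have "w = w'" using w' by (simp add: adj_rel_def)
    moreover have "w \<in> V" using Tedge vw by blast
    ultimately show "\<exists>d \<in> ?D. {v,d} \<in> E" using vw TE w' by blast
  qed
  show ?thesis unfolding connected_dominating_set_def using conD dom by blast
qed

lemma cross:
  assumes "(x,y) \<in> R\<^sup>*" "x \<in> S" "y \<notin> S"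
  shows "\<exists>a b. a \<in> S \<and> b \<notin> S \<and> (a,b) \<in> R"
  using assms by (induction rule: rtrancl_induct) blast+

lemma gs_exists:
  assumes fin: "finite D" and conn: "connected_graph D F" and FD: "\<forall>e\<in>F. e \<subseteq> D"
  shows "\<exists>ds. gs_ordering D F ds"
proof -
  have ex: "\<exists>ds. length ds = m \<and> distinct ds \<and> set ds \<subseteq> D \<and>
      (\<forall>i < length ds. 0 < i \<longrightarrow> (\<exists>j < i. {ds ! j, ds ! i} \<in> F))"
    if "1 \<le> m" "m \<le> card D" for m
    using that
  proof (induction m)
    case 0 then show ?case by simp
  next
    case (Suc m)
    show ?case
    proof (cases "m = 0")
      case True
      obtain x where "x \<in> D" using conn unfolding connected_graph_def by blast
      then show ?thesis using True by (intro exI[of _ "[x]"]) auto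
    next
      case False
      then obtain ds where ds: "length ds = m" "distinct ds" "set ds \<subseteq> D"
        "\<forall>i < length ds. 0 < i \<longrightarrow> (\<exists>j < i. {ds ! j, ds ! i} \<in> F)"
        using Suc by auto
      have "card (set ds) = m" using ds distinct_card by blast
      then have "set ds \<noteq> D" using Suc.prems by auto
      then obtain y where y: "y \<in> D" "y \<notin> set ds" using ds(3) by blast
      obtain x where x: "x \<in> set ds" using False ds(1) by (cases ds) auto
      have "(x,y) \<in> (adj_rel F)\<^sup>*" using conn x y ds(3) unfolding connected_graph_def by blast
      then obtain a b where ab: "a \<in> set ds" "b \<notin> set ds" "(a,b) \<in> adj_rel F"
        using cross x y by metis
      have abF: "{a,b} \<in> F" using ab(3) by (simp add: adj_rel_def)
      then have bD: "b \<in> D" using FD by blast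
      obtain ja where ja: "ja < m" "ds!ja = a" using ab(1) ds(1) by (metis in_set_conv_nth)
      let ?ds = "ds @ [b]"
      have "\<forall>i < length ?ds. 0 < i \<longrightarrow> (\<exists>j < i. {?ds ! j, ?ds ! i} \<in> F)"
      proof (intro allI impI)
        fix i assume i: "i < length ?ds" "0 < i"
        show "\<exists>j < i. {?ds ! j, ?ds ! i} \<in> F"
        proof (cases "i < m")
          case True
          then obtain j where "j < i" "{ds ! j, ds ! i} \<in> F" using ds(4) ds(1) i(2) by blast
          then show ?thesis using True ds(1) by (intro exI[of _ j]) (auto simp: nth_append)
        next
          case False
          then have "i = m" using i ds(1) by simp
          then show ?thesis using ja abF ds(1) by (intro exI[of _ ja]) (auto simp: nth_append)
        qed
      qed
      then show ?thesis using ds ab bD by (intro exI[of _ ?ds]) auto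
    qed
  qed
  have "1 \<le> card D" using conn fin by (auto simp: connected_graph_def card_gt_0_iff Suc_le_eq)
  then obtain ds where ds: "length ds = card D" "distinct ds" "set ds \<subseteq> D"
    "\<forall>i < length ds. 0 < i \<longrightarrow> (\<exists>j < i. {ds ! j, ds ! i} \<in> F)"
    using ex by blast
  have "set ds = D" using ds fin by (metis card_subset_eq distinct_card)
  then show ?thesis using ds unfolding gs_ordering_def by blast
qed

lemma cds_to_gs:
  assumes sg: "simple_graph V E" and cds: "connected_dominating_set V E D"
  shows "\<exists>vs. gs_ordering V E vs \<and> V - D \<subseteq> ftree_leaves E vs"
proof -
  have fin: "finite V" using sg by (simp add: simple_graph_def)
  have DV: "D \<subseteq> V" and cD: "connected_graph D {e \<in> E. e \<subseteq> D}"
    and dom: "\<forall>v \<in> V - D. \<exists>d \<in> D. {v, d} \<in> E"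
    using cds by (auto simp: connected_dominating_set_def)
  have finD: "finite D" using fin DV finite_subset by blast
  obtain ds where ds: "gs_ordering D {e \<in> E. e \<subseteq> D} ds" using gs_exists[OF finD cD] by blast
  have dsd: "distinct ds" "set ds = D" using ds by (auto simp: gs_ordering_def)
  have dsp: "\<forall>i < length ds. 0 < i \<longrightarrow> (\<exists>j < i. {ds ! j, ds ! i} \<in> E)"
    using ds by (auto simp: gs_ordering_def)
  have Dne: "D \<noteq> {}" using cD by (simp add: connected_graph_def)
  have lds: "0 < length ds" using Dne dsd by auto
  obtain rs where rs: "distinct rs" "set rs = V - D" using fin finite_distinct_list by (metis finite_Diff)
  define vs where "vs = ds @ rs"
  have nbr: "\<exists>l. l < length ds \<and> l < j \<and> {vs!l, vs!j} \<in> E" if j: "0 < j" "j < length vs" for j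
  proof (cases "j < length ds")
    case True
    then obtain l where "l < j" "{ds!l, ds!j} \<in> E" using dsp j(1) by blast
    then show ?thesis using True vs_def by (intro exI[of _ l]) (auto simp: nth_append)
  next
    case False
    then have "vs!j = rs!(j - length ds)" "j - length ds < length rs" using j vs_def by (auto simp: nth_append)
    then have "vs!j \<in> V - D" using rs by (metis nth_mem)
    then obtain d where d: "d \<in> D" "{vs!j, d} \<in> E" using dom by blast
    then obtain l where "l < length ds" "ds!l = d" using dsd by (metis in_set_conv_nth)
    then show ?thesis using d(2) vs_def False by (intro exI[of _ l]) (auto simp: nth_append insert_commute)
  qed
  have gs: "gs_ordering V E vs"
    unfolding gs_ordering_def
  proof (intro conjI allI impI)
    show "distinct vs" using dsd rs vs_def by auto
    show "set vs = V" using dsd rs vs_def DV by auto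
    fix i assume "i < length vs" "0 < i"
    then show "\<exists>j<i. {vs ! j, vs ! i} \<in> E" using nbr by blast
  qed
  have "V - D \<subseteq> ftree_leaves E vs"
  proof
    fix v assume v: "v \<in> V - D"
    then obtain q where q: "q < length rs" "rs!q = v" using rs by (metis in_set_conv_nth)
    define i where "i = length ds + q"
    have vi: "vs!i = v" "0 < i" "i < length vs" using q lds vs_def i_def by (auto simp: nth_append)
    have "ftree_parent_idx E vs j \<noteq> i" if "0 < j" "j < length vs" for j
    proof -
      note jj = that
      obtain l where l: "l < length ds" "{vs!l, vs!j} \<in> E" using nbr[OF jj] by blast
      have "ftree_parent_idx E vs j \<le> l" unfolding ftree_parent_idx_def
        by (rule Least_le[where P="\<lambda>l. {vs!l, vs!j} \<in> E", OF l(2)])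
      then show ?thesis using l(1) i_def by simp
    qed
    then show "v \<in> ftree_leaves E vs" unfolding ftree_leaves_def using vi by blast
  qed
  then show ?thesis using gs by blast
qed

theorem corollary3p6:
  fixes V :: "'a set" and E :: "'a set set" and k :: int
  assumes "simple_graph V E" and "connected_graph V E"
  shows "((\<exists>vs. gs_ordering V E vs \<and> int (card (ftree_leaves E vs)) \<ge> k) \<longleftrightarrow>
          (\<exists>T r. spanning_tree V E T \<and> r \<in> V \<and> int (card (rooted_tree_leaves V T r)) \<ge> k)) \<and>
         ((\<exists>T r. spanning_tree V E T \<and> r \<in> V \<and> int (card (rooted_tree_leaves V T r)) \<ge> k) \<longleftrightarrow>
          (\<exists>D. connected_dominating_set V E D \<and> int (card D) \<le> int (card V) - k))"
proof -
  have fin: "finite V" using assms(1) by (simp add: simple_graph_def)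
  have ne: "V \<noteq> {}" using assms(2) by (simp add: connected_graph_def)
  have A: "\<exists>T r. spanning_tree V E T \<and> r \<in> V \<and> int (card (rooted_tree_leaves V T r)) \<ge> k"
    if "gs_ordering V E vs" "int (card (ftree_leaves E vs)) \<ge> k" for vs
  proof -
    have h: "spanning_tree V E (ftree E vs) \<and> vs!0 \<in> V \<and>
         ftree_leaves E vs \<subseteq> rooted_tree_leaves V (ftree E vs) (vs!0)"
      by (rule gs_to_st[OF assms(1) that(1) ne])
    have "finite (rooted_tree_leaves V (ftree E vs) (vs!0))"
      using fin unfolding rooted_tree_leaves_def by simp
    then have "card (ftree_leaves E vs) \<le> card (rooted_tree_leaves V (ftree E vs) (vs!0))"
      using h card_mono by blast
    then have "k \<le> int (card (rooted_tree_leaves V (ftree E vs) (vs!0)))" using that(2) by linarith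
    then show ?thesis using h by blast
  qed
  have B: "\<exists>D. connected_dominating_set V E D \<and> int (card D) \<le> int (card V) - k"
    if "spanning_tree V E T" "r \<in> V" "int (card (rooted_tree_leaves V T r)) \<ge> k" for T r
  proof -
    let ?L = "rooted_tree_leaves V T r"
    have LV: "?L \<subseteq> V" unfolding rooted_tree_leaves_def by blast
    have "card (V - ?L) = card V - card ?L" using LV fin by (meson card_Diff_subset finite_subset)
    moreover have "card ?L \<le> card V" using LV fin card_mono by blast
    ultimately have "int (card (V - ?L)) \<le> int (card V) - k" using that(3) by linarith
    then show ?thesis using st_to_cds[OF assms(1) that(1,2)] by blast
  qed
  have C: "\<exists>vs. gs_ordering V E vs \<and> int (card (ftree_leaves E vs)) \<ge> k"
    if "connected_dominating_set V E D" "int (card D) \<le> int (card V) - k" for D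
  proof -
    note cc = that
    obtain vs where vs: "gs_ordering V E vs" "V - D \<subseteq> ftree_leaves E vs"
      using cds_to_gs[OF assms(1) cc(1)] by blast
    have "ftree_leaves E vs \<subseteq> set vs" unfolding ftree_leaves_def by auto
    then have "finite (ftree_leaves E vs)" using finite_subset by blast
    then have c1: "card (V - D) \<le> card (ftree_leaves E vs)" using vs(2) card_mono by blast
    have DV: "D \<subseteq> V" using that(1) by (simp add: connected_dominating_set_def)
    have "card (V - D) = card V - card D" using DV fin by (meson card_Diff_subset finite_subset)
    moreover have "card D \<le> card V" using DV fin card_mono by blast
    ultimately have "k \<le> int (card (ftree_leaves E vs))" using c1 cc(2) by linarith
    then show ?thesis using vs by blast
  qed
  show ?thesis using A B C by blast
qed

end
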